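(* There is no circulant weighing matrix $CW(154,81)$.
   Context: A circulant weighing matrix $CW(n,k)$ is an $n\times n$ circulant matrix $W$ (each row after the first is the right cyclic shift of the previous row) with all entries in $\{0,1,-1\}$ such that $WW^T=kI_n$. *)

theory Defs
  imports Main
begin

text \<open>An n x n matrix is represented as a function nat => nat => int, indices in {0..<n}.\<close>

definition circulant :: "nat \<Rightarrow> (nat \<Rightarrow> nat \<Rightarrow> int) \<Rightarrow> bool" where
  "circulant n W \<longleftrightarrow>
     (\<forall>i<n. \<forall>j<n. W i j = W 0 (nat ((int j - int i) mod int n)))"

definition circulant_weighing_matrix :: "nat \<Rightarrow> nat \<Rightarrow> (nat \<Rightarrow> nat \<Rightarrow> int) \<Rightarrow> bool" where
  "circulant_weighing_matrix n k W \<longleftrightarrow>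
     circulant n W \<and>
     (\<forall>i<n. \<forall>j<n. W i j \<in> {0, 1, -1}) \<and>
     (\<forall>i<n. \<forall>j<n. (\<Sum>l<n. W i l * W j l) = (if i = j then int k else 0))"

end

theory Submission
  imports Defs "HOL-Computational_Algebra.Polynomial"
begin

definition Jm :: "nat \<Rightarrow> int poly" where "Jm m = monom 1 m - 1"

lemma pcompose_power_left: "((p::int poly) ^ k) \<circ>\<^sub>p q = (p \<circ>\<^sub>p q) ^ k"
  by (induction k) (simp_all add: pcompose_mult pcompose_1)

lemma pcompose_x: "[:0, 1:] \<circ>\<^sub>p (q::int poly) = q"
  by (simp add: pcompose_pCons)

lemma monom_pcomp: "monom (c::int) k \<circ>\<^sub>p q = smult c (q ^ k)"
  by (simp add: monom_altdef pcompose_smult pcompose_power_left pcompose_x)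

lemma monom_pcomp_monom: "monom (c::int) k \<circ>\<^sub>p monom 1 d = monom c (k * d)"
proof -
  have "monom c k \<circ>\<^sub>p monom 1 d = monom c (d * k)"
    by (simp add: monom_pcomp monom_power smult_monom)
  then show ?thesis by (simp add: mult.commute)
qed

lemma x_minus_1_dvd_power: "(x - 1) dvd (x ^ t - (1::'a::comm_ring_1))"
proof (induction t)
  case 0 then show ?case by simp
next
  case (Suc t)
  have e: "x ^ Suc t - 1 = x * (x ^ t - 1) + (x - 1)" by (simp add: algebra_simps)
  show ?case unfolding e by (rule dvd_add) (use Suc in auto)
qed

lemma Jm_dvd_monom_mult: "Jm m dvd (monom 1 (m * t) - 1)"
proof -
  have "monom (1::int) (m * t) = (monom 1 m) ^ t" by (simp add: monom_power)
  then show ?thesis unfolding Jm_def using x_minus_1_dvd_power by metis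
qed

lemma monom_cong_mod: "Jm m dvd (monom c k - monom c (k mod m))"
proof -
  have "monom c k = monom c (k mod m) * monom 1 (m * (k div m))"
    by (simp add: mult_monom)
  then have "monom c k - monom c (k mod m) = monom c (k mod m) * (monom 1 (m * (k div m)) - 1)"
    by (simp add: algebra_simps)
  then show ?thesis using Jm_dvd_monom_mult by (metis dvd_mult)
qed

lemma monom_cong: "k1 mod m = k2 mod m \<Longrightarrow> Jm m dvd (monom c k1 - monom c k2)"
proof -
  assume h: "k1 mod m = k2 mod m"
  have "monom c k1 - monom c k2 = (monom c k1 - monom c (k1 mod m)) - (monom c k2 - monom c (k2 mod m))"
    using h by simp
  then show ?thesis using monom_cong_mod by (metis dvd_diff)
qed

lemma pcomp_inner_cong: "(d::int poly) dvd (f - g) \<Longrightarrow> d dvd (p \<circ>\<^sub>p f - p \<circ>\<^sub>p g)"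
proof (induction p)
  case 0 then show ?case by simp
next
  case (pCons a p)
  have "pCons a p \<circ>\<^sub>p f - pCons a p \<circ>\<^sub>p g = (f - g) * (p \<circ>\<^sub>p f) + g * (p \<circ>\<^sub>p f - p \<circ>\<^sub>p g)"
    by (simp add: pcompose_pCons algebra_simps)
  then show ?case using pCons by simp
qed

lemma Jm_pcomp: "Jm m \<circ>\<^sub>p monom 1 k = monom 1 (m * k) - 1"
  by (simp add: Jm_def pcompose_diff monom_pcomp_monom pcompose_1)

lemma pcomp_outer_cong: "Jm m dvd p \<Longrightarrow> Jm m dvd (p \<circ>\<^sub>p monom 1 k)"
proof -
  assume "Jm m dvd p"
  then obtain r where "p = Jm m * r" by blast
  then have "p \<circ>\<^sub>p monom 1 k = (monom 1 (m * k) - 1) * (r \<circ>\<^sub>p monom 1 k)"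
    by (simp add: pcompose_mult Jm_pcomp)
  then show ?thesis using Jm_dvd_monom_mult by (metis dvd_mult2)
qed

lemma degree_Jm: "m > 0 \<Longrightarrow> degree (Jm m) = m"
proof -
  assume m: "m > 0"
  have "monom 1 m - 1 = monom (1::int) m + (- 1)" by simp
  also have "degree \<dots> = degree (monom (1::int) m)"
    by (rule degree_add_eq_left) (use m in \<open>simp add: degree_monom_eq\<close>)
  finally show ?thesis unfolding Jm_def by (simp add: degree_monom_eq)
qed

lemma coeff_Jm_m: "m > 0 \<Longrightarrow> coeff (Jm m) m = 1"
  unfolding Jm_def by simp

lemma lead_coeff_Jm: "m > 0 \<Longrightarrow> lead_coeff (Jm m) = 1"
proof -
  assume m: "m > 0"
  have "degree (Jm m) = m" by (rule degree_Jm[OF m])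
  then show ?thesis using coeff_Jm_m[OF m] by metis
qed

lemma Jm_nz: "m > 0 \<Longrightarrow> Jm m \<noteq> 0"
proof
  assume m: "m > 0" and "Jm m = 0"
  then have "coeff (Jm m) m = 0" by simp
  then show False using coeff_Jm_m[OF m] by simp
qed

lemma reduce_exists: "m > 0 \<Longrightarrow> \<exists>r. degree r < m \<and> Jm m dvd (p - r)"
proof -
  assume m: "m > 0"
  obtain q r where qr: "pseudo_divmod p (Jm m) = (q, r)" by (cases "pseudo_divmod p (Jm m)") auto
  have 1: "smult (lead_coeff (Jm m) ^ (Suc (degree p) - degree (Jm m))) p = Jm m * q + r"
    using pseudo_divmod(1)[OF Jm_nz[OF m] qr] .
  have 2: "r = 0 \<or> degree r < degree (Jm m)" using pseudo_divmod(2)[OF Jm_nz[OF m] qr] .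
  from 1 have "p = Jm m * q + r" using lead_coeff_Jm[OF m] by simp
  then have "Jm m dvd (p - r)" by simp
  moreover have "degree r < m" using 2 degree_Jm[OF m] m by auto
  ultimately show ?thesis by blast
qed

lemma small_dvd_zero: "m > 0 \<Longrightarrow> degree r < m \<Longrightarrow> Jm m dvd r \<Longrightarrow> r = 0"
proof (rule ccontr)
  assume m: "m > 0" and r: "degree r < m" and d: "Jm m dvd r" and nz: "r \<noteq> 0"
  have "degree (Jm m) \<le> degree r" by (rule dvd_imp_degree_le[OF d nz])
  then show False using r degree_Jm[OF m] by simp
qed

lemma Jm_cancel: "m > 0 \<Longrightarrow> c \<noteq> 0 \<Longrightarrow> Jm m dvd smult c p \<Longrightarrow> Jm m dvd p"
  by (rule dvd_monic[OF lead_coeff_Jm])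

definition rs :: "nat \<Rightarrow> (nat \<Rightarrow> int) \<Rightarrow> int poly" where
  "rs m a = (\<Sum>i<m. monom (a i) i)"

lemma coeff_rs: "coeff (rs m a) j = (if j < m then a j else 0)"
  unfolding rs_def by (simp add: coeff_sum)

lemma degree_rs: "m > 0 \<Longrightarrow> degree (rs m a) < m"
proof -
  assume m: "m > 0"
  have "degree (rs m a) \<le> m - 1" by (rule degree_le) (use m in \<open>auto simp: coeff_rs\<close>)
  then show ?thesis using m by linarith
qed

lemma rs_unique: "m > 0 \<Longrightarrow> Jm m dvd (rs m a - rs m b) \<Longrightarrow> j < m \<Longrightarrow> a j = b j"
proof -
  assume m: "m > 0" and d: "Jm m dvd (rs m a - rs m b)" and j: "j < m"
  have "degree (rs m a - rs m b) < m" using degree_rs[OF m] by (simp add: degree_diff_less)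
  then have "rs m a - rs m b = 0" using small_dvd_zero[OF m _ d] by simp
  then have "coeff (rs m a) j = coeff (rs m b) j" by simp
  then show ?thesis using j by (simp add: coeff_rs)
qed

lemma rs_of_deg: "degree r < m \<Longrightarrow> r = rs m (coeff r)"
  by (rule poly_eqI) (auto simp: coeff_rs coeff_eq_0)

lemma reduce_rs: "m > 0 \<Longrightarrow> \<exists>a. Jm m dvd (p - rs m a)"
proof -
  assume m: "m > 0"
  obtain r where r1: "degree r < m" and r2: "Jm m dvd (p - r)" using reduce_exists[OF m] by blast
  have "r = rs m (coeff r)" using r1 by (rule rs_of_deg)
  then have "Jm m dvd (p - rs m (coeff r))" using r2 by metis
  then show ?thesis by blast
qed

lemma dvd_sum_diff: "(\<And>x. x \<in> A \<Longrightarrow> (d::int poly) dvd (f x - g x)) \<Longrightarrow> d dvd (sum f A - sum g A)"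
  by (simp add: sum_subtractf[symmetric] dvd_sum)

definition nu :: "nat \<Rightarrow> nat \<Rightarrow> nat \<Rightarrow> nat" where
  "nu m i l = nat ((int i - int l) mod int m)"

definition ac :: "nat \<Rightarrow> (nat \<Rightarrow> int) \<Rightarrow> nat \<Rightarrow> int" where
  "ac m a j = (\<Sum>l<m. a l * a (nat ((int l - int j) mod int m)))"

lemma nu_less: "m > 0 \<Longrightarrow> nu m i l < m"
  unfolding nu_def by (simp add: nat_less_iff)

lemma nu_invol: "m > 0 \<Longrightarrow> l < m \<Longrightarrow> nu m i (nu m i l) = l"
proof -
  assume m: "m > 0" and l: "l < m"
  have "int (nu m i l) = (int i - int l) mod int m" unfolding nu_def using m by simp
  then have "(int i - int (nu m i l)) mod int m = (int i - (int i - int l)) mod int m"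
    by (simp add: mod_diff_right_eq)
  also have "\<dots> = int l" using l by simp
  finally show ?thesis unfolding nu_def by simp
qed

lemma exp_mod: "m > 0 \<Longrightarrow> (i + l * (m - 1)) mod m = nu m i l"
proof -
  assume m: "m > 0"
  have "int ((i + l * (m - 1)) mod m) = (int i + int l * (int m - 1)) mod int m"
    using m by (simp add: of_nat_mod of_nat_diff)
  also have "\<dots> = ((int i - int l) + int l * int m) mod int m" by (simp add: algebra_simps)
  also have "\<dots> = (int i - int l) mod int m" by simp
  also have "\<dots> = int (nu m i l)" unfolding nu_def using m by simp
  finally show ?thesis by simp
qed

lemma AC: "m > 0 \<Longrightarrow> Jm m dvd (rs m a * (rs m a \<circ>\<^sub>p monom 1 (m - 1)) - rs m (ac m a))"
proof -
  assume m: "m > 0"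
  have S1: "rs m a \<circ>\<^sub>p monom 1 (m - 1) = (\<Sum>l<m. monom (a l) (l * (m - 1)))"
    unfolding rs_def by (simp add: pcompose_sum monom_pcomp_monom)
  have S2: "rs m a * (rs m a \<circ>\<^sub>p monom 1 (m - 1)) = (\<Sum>i<m. \<Sum>l<m. monom (a i * a l) (i + l * (m - 1)))"
    unfolding S1 unfolding rs_def by (simp add: sum_product mult_monom)
  have S3: "Jm m dvd ((\<Sum>i<m. \<Sum>l<m. monom (a i * a l) (i + l * (m - 1))) - (\<Sum>i<m. \<Sum>l<m. monom (a i * a l) (nu m i l)))"
  proof (rule dvd_sum_diff)+
    fix i l
    show "Jm m dvd (monom (a i * a l) (i + l * (m - 1)) - monom (a i * a l) (nu m i l))"
      using exp_mod[OF m, of i l] nu_less[OF m, of i l] by (intro monom_cong) simp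
  qed
  have S4: "(\<Sum>l<m. monom (a i * a l) (nu m i l)) = (\<Sum>j<m. monom (a i * a (nu m i j)) j)" for i
    by (rule sum.reindex_bij_witness[where i = "nu m i" and j = "nu m i"])
       (auto simp: nu_invol[OF m] nu_less[OF m])
  have S5: "(\<Sum>i<m. \<Sum>j<m. monom (a i * a (nu m i j)) j) = rs m (ac m a)"
    unfolding rs_def ac_def nu_def by (subst sum.swap) (simp add: monom_sum)
  show ?thesis using S3 unfolding S2 S4 S5 .
qed

definition Ik :: "nat \<Rightarrow> nat \<Rightarrow> int poly \<Rightarrow> bool" where
  "Ik m k p \<longleftrightarrow> (\<exists>a. Jm m dvd (p - smult (3 ^ k) a))"

lemma smult_cm: "smult c p = [:c:] * (p::int poly)" by simp

lemma Ik_0: "Ik m 0 p"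
  unfolding Ik_def by (rule exI[of _ p]) simp

lemma Ik_J: "Jm m dvd p \<Longrightarrow> Ik m k p"
  unfolding Ik_def by (rule exI[of _ 0]) simp

lemma Ik_add: "Ik m k p \<Longrightarrow> Ik m k q \<Longrightarrow> Ik m k (p + q)"
proof -
  assume "Ik m k p" "Ik m k q"
  then obtain a b where a: "Jm m dvd (p - smult (3^k) a)" and b: "Jm m dvd (q - smult (3^k) b)"
    unfolding Ik_def by blast
  have eq: "p + q - smult (3^k) (a + b) = (p - smult (3^k) a) + (q - smult (3^k) b)"
    by (simp add: smult_add_right algebra_simps)
  have "Jm m dvd ((p - smult (3^k) a) + (q - smult (3^k) b))" using a b by (rule dvd_add)
  then have "Jm m dvd (p + q - smult (3^k) (a + b))" by (simp only: eq)
  then show ?thesis unfolding Ik_def by blast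
qed

lemma Ik_uminus: "Ik m k p \<Longrightarrow> Ik m k (- p)"
proof -
  assume "Ik m k p"
  then obtain a where a: "Jm m dvd (p - smult (3^k) a)" unfolding Ik_def by blast
  have "- p - smult (3^k) (- a) = - (p - smult (3^k) a)" by simp
  then have "Jm m dvd (- p - smult (3^k) (- a))" using a by (metis dvd_minus_iff)
  then show ?thesis unfolding Ik_def by blast
qed

lemma Ik_diff: "Ik m k p \<Longrightarrow> Ik m k q \<Longrightarrow> Ik m k (p - q)"
  using Ik_add[of m k p "- q"] Ik_uminus[of m k q] by simp

lemma Ik_mult_left: "Ik m k p \<Longrightarrow> Ik m k (q * p)"
proof -
  assume "Ik m k p"
  then obtain a where a: "Jm m dvd (p - smult (3^k) a)" unfolding Ik_def by blast
  have "q * p - smult (3^k) (q * a) = q * (p - smult (3^k) a)" by (simp add: algebra_simps)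
  then have "Jm m dvd (q * p - smult (3^k) (q * a))" using a by (metis dvd_mult)
  then show ?thesis unfolding Ik_def by blast
qed

lemma Ik_mult_right: "Ik m k p \<Longrightarrow> Ik m k (p * q)"
  using Ik_mult_left[of m k p q] by (simp add: mult.commute)

lemma Ik_mult: "Ik m j p \<Longrightarrow> Ik m k q \<Longrightarrow> Ik m (j + k) (p * q)"
proof -
  assume "Ik m j p" "Ik m k q"
  then obtain a b where a: "Jm m dvd (p - smult (3^j) a)" and b: "Jm m dvd (q - smult (3^k) b)"
    unfolding Ik_def by blast
  have "p * q - smult (3^(j+k)) (a * b) = (p - smult (3^j) a) * q + smult (3^j) a * (q - smult (3^k) b)"
    by (simp add: algebra_simps power_add mult_smult_left mult_smult_right smult_diff_right)
  then have "Jm m dvd (p * q - smult (3^(j+k)) (a * b))" using a b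
    by (metis dvd_add dvd_mult dvd_mult2)
  then show ?thesis unfolding Ik_def by blast
qed

lemma Ik_mono: "j \<le> k \<Longrightarrow> Ik m k p \<Longrightarrow> Ik m j p"
proof -
  assume jk: "j \<le> k" and "Ik m k p"
  then obtain a where a: "Jm m dvd (p - smult (3^k) a)" unfolding Ik_def by blast
  have "smult ((3::int)^k) a = smult (3^j) (smult (3^(k-j)) a)"
    using jk by (simp add: power_add[symmetric])
  then show ?thesis unfolding Ik_def using a by metis
qed

lemma Ik_smult3: "Ik m k p \<Longrightarrow> Ik m (Suc k) (smult 3 p)"
proof -
  assume "Ik m k p"
  then obtain a where a: "Jm m dvd (p - smult (3^k) a)" unfolding Ik_def by blast
  have "smult 3 p - smult (3^Suc k) a = smult 3 (p - smult (3^k) a)" by (simp add: smult_diff_right)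
  then have "Jm m dvd (smult 3 p - smult (3^Suc k) a)" using a by (metis dvd_smult)
  then show ?thesis unfolding Ik_def by blast
qed

lemma Ik_tors: "m > 0 \<Longrightarrow> Ik m (Suc k) (smult 3 p) \<Longrightarrow> Ik m k p"
proof -
  assume m: "m > 0" and "Ik m (Suc k) (smult 3 p)"
  then obtain a where a: "Jm m dvd (smult 3 p - smult (3^Suc k) a)" unfolding Ik_def by blast
  have "smult 3 p - smult (3^Suc k) a = smult 3 (p - smult (3^k) a)" by (simp add: smult_diff_right)
  then have "Jm m dvd (p - smult (3^k) a)" using a Jm_cancel[OF m, of 3] by simp
  then show ?thesis unfolding Ik_def by blast
qed

lemma Ik_pcomp: "Ik m k p \<Longrightarrow> Ik m k (p \<circ>\<^sub>p monom 1 d)"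
proof -
  assume "Ik m k p"
  then obtain a where a: "Jm m dvd (p - smult (3^k) a)" unfolding Ik_def by blast
  have "(p - smult (3^k) a) \<circ>\<^sub>p monom 1 d = p \<circ>\<^sub>p monom 1 d - smult (3^k) (a \<circ>\<^sub>p monom 1 d)"
    by (simp add: pcompose_diff pcompose_smult)
  then have "Jm m dvd (p \<circ>\<^sub>p monom 1 d - smult (3^k) (a \<circ>\<^sub>p monom 1 d))"
    using pcomp_outer_cong[OF a] by metis
  then show ?thesis unfolding Ik_def by blast
qed

lemma Ik_power_cong: "Ik m k (a - b) \<Longrightarrow> Ik m k (a ^ n - b ^ n)"
proof (induction n)
  case 0 then show ?case by (simp add: Ik_J)
next
  case (Suc n)
  have e: "a ^ Suc n - b ^ Suc n = a * (a ^ n - b ^ n) + b ^ n * (a - b)" by (simp add: algebra_simps)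
  show ?case unfolding e by (rule Ik_add; rule Ik_mult_left) (use Suc in auto)
qed

lemma Ik_cube: "k \<ge> 1 \<Longrightarrow> Ik m k (a - b) \<Longrightarrow> Ik m (Suc k) (a ^ 3 - b ^ 3)"
proof -
  assume k: "k \<ge> 1" and t: "Ik m k (a - b)"
  define t where "t = a - b"
  have e0: "a ^ 3 - b ^ 3 = 3 * (b^2 * t) + 3 * (b * t^2) + t * t * t"
    unfolding t_def by algebra
  have three: "(3::int poly) * y = smult 3 y" for y by (simp add: numeral_poly)
  have e: "a ^ 3 - b ^ 3 = smult 3 (b^2 * t) + smult 3 (b * t^2) + t * t * t"
    using e0 by (simp only: three)
  have t': "Ik m k t" using t unfolding t_def .
  have 1: "Ik m (Suc k) (smult 3 (b^2 * t))" by (rule Ik_smult3, rule Ik_mult_left, rule t')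
  have 2: "Ik m (Suc k) (smult 3 (b * t^2))"
    by (rule Ik_smult3, rule Ik_mult_left) (simp add: power2_eq_square Ik_mult_left t')
  have "Ik m (k + k + k) (t * t * t)" by (intro Ik_mult t')
  then have 3: "Ik m (Suc k) (t * t * t)" using k by (intro Ik_mono[of "Suc k" "k+k+k"]) auto
  show ?thesis unfolding e by (intro Ik_add 1 2 3)
qed

lemma Ik_lift: "Ik m 1 (a - b) \<Longrightarrow> Ik m (Suc j) (a ^ (3 ^ j) - b ^ (3 ^ j))"
proof (induction j)
  case 0 then show ?case by simp
next
  case (Suc j)
  have "Ik m (Suc (Suc j)) ((a ^ (3 ^ j)) ^ 3 - (b ^ (3 ^ j)) ^ 3)"
    by (rule Ik_cube) (use Suc in auto)
  then show ?case by (simp add: power_mult[symmetric] mult.commute)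
qed

definition phi :: "int poly \<Rightarrow> int poly" where "phi p = p \<circ>\<^sub>p monom 1 3"

lemma phi_mult: "phi (p * q) = phi p * phi q" unfolding phi_def by (simp add: pcompose_mult)
lemma phi_diff: "phi (p - q) = phi p - phi q" unfolding phi_def by (simp add: pcompose_diff)
lemma phi_add: "phi (p + q) = phi p + phi q" unfolding phi_def by (simp add: pcompose_add)
lemma phi_1: "phi 1 = 1" unfolding phi_def by (simp add: pcompose_1)
lemma phi_smult: "phi (smult c p) = smult c (phi p)" unfolding phi_def by (simp add: pcompose_smult)
lemma phi_power: "phi (p ^ n) = (phi p) ^ n" unfolding phi_def by (simp add: pcompose_power_left)
lemma phi_J: "Jm m dvd p \<Longrightarrow> Jm m dvd phi p" unfolding phi_def by (rule pcomp_outer_cong)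

lemma frob: "\<exists>q. (p::int poly) \<circ>\<^sub>p monom 1 3 - p ^ 3 = smult 3 q"
proof (induction p)
  case 0 then show ?case by simp
next
  case (pCons a p)
  then obtain q where q: "p \<circ>\<^sub>p monom 1 3 - p ^ 3 = smult 3 q" by blast
  have "(3::int) dvd (a - a ^ 3)"
  proof -
    have "a ^ 3 - a = (a - 1) * a * (a + 1)" by (simp add: algebra_simps power3_eq_cube)
    moreover have "(3::int) dvd (a - 1) * a * (a + 1)"
    proof -
      have "a mod 3 = 0 \<or> a mod 3 = 1 \<or> a mod 3 = 2" by arith
      then have "3 dvd (a - 1) \<or> 3 dvd a \<or> 3 dvd (a + 1)" by (auto simp: dvd_eq_mod_eq_0 mod_simps) presburger+
      then show ?thesis by auto
    qed
    ultimately show ?thesis by (metis dvd_minus_iff minus_diff_eq)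
  qed
  then obtain c where c: "a - a ^ 3 = 3 * c" by blast
  define x where "x = monom (1::int) 1"
  define A where "A = [:a:]"
  have pc: "pCons a p = A + x * p" unfolding x_def A_def
    by (rule poly_eqI) (simp add: coeff_monom_mult coeff_pCons split: nat.split)
  have x3: "monom (1::int) 3 = x ^ 3" unfolding x_def by (simp add: monom_power)
  have lhs: "pCons a p \<circ>\<^sub>p monom 1 3 = A + x ^ 3 * (p \<circ>\<^sub>p monom 1 3)"
    unfolding A_def by (simp add: pcompose_pCons x3)
  have AA: "A - A ^ 3 = [:3:] * [:c:]" unfolding A_def using c by (simp add: poly_const_pow mult_to_poly)
  have pc3: "(pCons a p) ^ 3 = (A + x * p) ^ 3" using pc by simp
  have three: "(3::int poly) * y = smult 3 y" for y by (simp add: numeral_poly)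
  have alg: "(A + x ^ 3 * P) - (A + x * p) ^ 3
        = (A - A ^ 3) + x ^ 3 * (P - p ^ 3) - 3 * (A^2 * x * p + A * x^2 * p^2)" for P
    by algebra
  have "pCons a p \<circ>\<^sub>p monom 1 3 - (pCons a p) ^ 3
        = (A - A ^ 3) + x ^ 3 * (p \<circ>\<^sub>p monom 1 3 - p ^ 3) - [:3:] * (A^2 * x * p + A * x^2 * p^2)"
    unfolding lhs pc3 alg by (simp only: numeral_poly)
  also have "\<dots> = smult 3 ([:c:] + x ^ 3 * q - (A^2 * x * p + A * x^2 * p^2))"
    unfolding AA q smult_cm by (simp add: algebra_simps)
  finally show ?case by blast
qed

lemma monom_1_1: "monom (1::int) 1 = [:0, 1:]" by (simp add: monom_Suc)

lemma pcomp_x1: "(p::int poly) \<circ>\<^sub>p monom 1 (Suc 0) = p"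
  using monom_1_1 pcompose_idR by (metis One_nat_def)

lemma frob_iter: "\<exists>q. (p::int poly) \<circ>\<^sub>p monom 1 (3 ^ j) - p ^ (3 ^ j) = smult 3 q"
proof (induction j)
  case 0
  have "p \<circ>\<^sub>p monom 1 (3 ^ 0) - p ^ (3 ^ 0) = smult 3 0" by (simp add: pcomp_x1)
  then show ?case by blast
next
  case (Suc j)
  define R where "R = p \<circ>\<^sub>p monom 1 (3 ^ j)"
  define P where "P = p ^ (3 ^ j)"
  obtain q where q: "R - P = smult 3 q" using Suc unfolding R_def P_def by blast
  obtain q' where q': "R \<circ>\<^sub>p monom 1 3 - R ^ 3 = smult 3 q'" using frob by blast
  have e1: "R \<circ>\<^sub>p monom 1 3 = p \<circ>\<^sub>p monom 1 (3 ^ Suc j)"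
    unfolding R_def by (simp add: pcompose_assoc[symmetric] monom_pcomp_monom mult.commute)
  have e2: "p ^ (3 ^ Suc j) = P ^ 3" unfolding P_def by (simp add: power_mult[symmetric] mult.commute)
  have e3: "R ^ 3 - P ^ 3 = (R - P) * (R^2 + R * P + P^2)" by algebra
  have "p \<circ>\<^sub>p monom 1 (3 ^ Suc j) - p ^ (3 ^ Suc j) = (R \<circ>\<^sub>p monom 1 3 - R ^ 3) + (R ^ 3 - P ^ 3)"
    unfolding e1 e2 by simp
  also have "\<dots> = smult 3 (q' + q * (R^2 + R * P + P^2))"
    unfolding e3 q q' by (simp add: smult_add_right)
  finally show ?case by blast
qed

lemma fermat_gen:
  assumes m: "m > 0" and d: "m dvd (3 ^ N - 1)"
  shows "Ik m 1 ((p::int poly) ^ (3 ^ N) - p)"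
proof -
  have pos: "(3::nat) ^ N \<ge> 1" by simp
  have "(3 ^ N) mod m = 1 mod m"
  proof -
    from d obtain t where t: "3 ^ N - 1 = m * t" by blast
    then have "(3::nat) ^ N = 1 + m * t" using pos by linarith
    then have h: "(3::nat) ^ N = 1 + t * m" by (simp add: mult.commute)
    have "(1 + t * m) mod m = 1 mod m" by (rule mod_mult_self1)
    then show ?thesis using h by simp
  qed
  then have "Jm m dvd (monom 1 (3 ^ N) - monom 1 1)" by (rule monom_cong)
  then have j: "Jm m dvd (p \<circ>\<^sub>p monom 1 (3 ^ N) - p \<circ>\<^sub>p monom 1 1)" by (rule pcomp_inner_cong)
  obtain q where q: "p \<circ>\<^sub>p monom 1 (3 ^ N) - p ^ (3 ^ N) = smult 3 q" using frob_iter by blast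
  have "p ^ (3 ^ N) - p - smult (3 ^ 1) (- q) = p \<circ>\<^sub>p monom 1 (3 ^ N) - p \<circ>\<^sub>p monom 1 1"
    using q by (simp add: pcomp_x1 algebra_simps)
  then show ?thesis unfolding Ik_def using j by metis
qed

lemma Ik_phi: "Ik m k p \<Longrightarrow> Ik m k (phi p)"
  unfolding phi_def by (rule Ik_pcomp)

lemma phi_frob: "Ik m 1 (phi p - p ^ 3)"
proof -
  obtain q where q: "p \<circ>\<^sub>p monom 1 3 - p ^ 3 = smult 3 q" using frob by blast
  have "Jm m dvd (phi p - p ^ 3 - smult (3 ^ 1) q)" unfolding phi_def q by simp
  then show ?thesis unfolding Ik_def by blast
qed

lemma valuation:
  fixes N m :: nat
  assumes m: "m > 0" and N: "N \<ge> 1" and fer: "\<And>p. Ik m 1 (p ^ (3 ^ N) - p)"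
  shows "Ik m k (A * B) \<Longrightarrow> Ik m k (phi A * B)"
proof (induction k arbitrary: A B)
  case 0 then show ?case by (simp add: Ik_0)
next
  case (Suc k)
  define q :: nat where "q = 3 ^ N"
  have q3: "q \<ge> 3" unfolding q_def using N by (metis power_increasing power_one_right zero_less_numeral one_le_numeral)
  have ferq: "Ik m 1 (p ^ q - p)" for p unfolding q_def by (rule fer)
  define e where "e = A ^ (q - 1)"
  define eps where "eps = e ^ (q ^ Suc k)"
  have Aq: "A ^ q = A * e" unfolding e_def using q3 by (simp add: power_Suc[symmetric])
  have eq: "Ik m 1 (e ^ q - e)"
  proof -
    have "Ik m 1 ((A ^ q) ^ (q - 1) - A ^ (q - 1))" by (rule Ik_power_cong[OF ferq])
    moreover have "(A ^ q) ^ (q - 1) = e ^ q" unfolding e_def by (simp add: power_mult[symmetric] mult.commute)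
    ultimately show ?thesis unfolding e_def by simp
  qed
  have eqj: "Ik m 1 (e ^ (q ^ j) - e)" for j
  proof (induction j)
    case 0 then show ?case by (simp add: Ik_J)
  next
    case (Suc j)
    have "Ik m 1 ((e ^ (q ^ j)) ^ q - e ^ q)" by (rule Ik_power_cong[OF Suc])
    moreover have "(e ^ (q ^ j)) ^ q = e ^ (q ^ Suc j)" by (simp add: power_mult[symmetric] mult.commute)
    ultimately have "Ik m 1 (e ^ (q ^ Suc j) - e ^ q)" by simp
    from Ik_add[OF this eq] show ?case by simp
  qed
  have s1: "Ik m 1 (A * (1 - eps))"
  proof -
    have a: "Ik m 1 (A * (eps - e))" unfolding eps_def by (rule Ik_mult_left[OF eqj])
    have b: "Ik m 1 (A ^ q - A)" by (rule ferq)
    have "A * (1 - eps) = - (A * (eps - e)) - (A ^ q - A)" unfolding Aq by (simp add: algebra_simps)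
    then show ?thesis using Ik_diff[OF Ik_uminus[OF a] b] by simp
  qed
  have e2: "Ik m 1 (e * e - e)"
  proof -
    have "e * e - e = (A ^ q - A) * A ^ (q - 2)"
    proof -
      have "(q - 1) + (q - 1) = q + (q - 2)" using q3 by simp
      then have "e * e = A ^ q * A ^ (q - 2)" unfolding e_def by (metis power_add)
      moreover have "A * A ^ (q - 2) = e" unfolding e_def using q3 by (simp add: power_Suc[symmetric] Suc_diff_Suc numeral_2_eq_2)
      ultimately show ?thesis by (simp add: algebra_simps)
    qed
    then show ?thesis using Ik_mult_right[OF ferq] by simp
  qed
  have e3: "Ik m 1 (e ^ 3 - e)"
  proof -
    have eq3: "e ^ 3 - e = e * (e * e - e) + (e * e - e)" by (simp add: algebra_simps power3_eq_cube)
    show ?thesis unfolding eq3 by (rule Ik_add[OF Ik_mult_left[OF e2] e2])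
  qed
  have phie: "Ik m 1 (phi e - e)"
  proof -
    have "Ik m 1 ((phi A) ^ (q - 1) - (A ^ 3) ^ (q - 1))" by (rule Ik_power_cong[OF phi_frob])
    moreover have "(phi A) ^ (q - 1) = phi e" unfolding e_def by (simp add: phi_power)
    moreover have "(A ^ 3) ^ (q - 1) = e ^ 3" unfolding e_def by (simp add: power_mult[symmetric] mult.commute)
    ultimately have "Ik m 1 (phi e - e ^ 3)" by simp
    from Ik_add[OF this e3] show ?thesis by simp
  qed
  have s2: "Ik m (Suc k) (phi eps - eps)"
  proof -
    have "Ik m (Suc (N * Suc k)) ((phi e) ^ (3 ^ (N * Suc k)) - e ^ (3 ^ (N * Suc k)))"
      by (rule Ik_lift[OF phie])
    moreover have "(3::nat) ^ (N * Suc k) = q ^ Suc k" unfolding q_def by (rule power_mult)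
    ultimately have h: "Ik m (Suc (N * Suc k)) (phi eps - eps)" unfolding eps_def by (simp add: phi_power)
    have le: "Suc k \<le> Suc (N * Suc k)" using N mult_le_mono1[of 1 N "Suc k"] by simp
    show ?thesis by (rule Ik_mono[OF le h])
  qed
  have s3: "Ik m (Suc k) (B * eps)"
  proof -
    define M where "M = (q - 1) * q ^ Suc k"
    have epsM: "eps = A ^ M" unfolding eps_def e_def M_def power_mult ..
    have a1: "q - 1 > 0" using q3 by simp
    have a2: "q ^ Suc k > 0" using q3 by simp
    have pos: "M > 0" unfolding M_def using a1 a2 by simp
    have "A ^ M = A ^ Suc (M - 1)" using pos by simp
    also have "\<dots> = A * A ^ (M - 1)" by (rule power_Suc)
    finally have AM: "A ^ M = A * A ^ (M - 1)" .
    have "B * eps = (A * B) * A ^ (M - 1)" unfolding epsM AM by (simp only: mult.assoc mult.commute mult.left_commute)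
    then show ?thesis by (simp only: Ik_mult_right[OF Suc.prems])
  qed
  obtain A' where A': "Jm m dvd (A * (1 - eps) - smult (3 ^ 1) A')" using s1 unfolding Ik_def by blast
  define D where "D = A * (1 - eps) - smult 3 A'"
  have DJ: "Jm m dvd D" using A' unfolding D_def by simp
  have s4: "Ik m (Suc k) (smult 3 (phi A' * B))"
  proof -
    have "smult 3 (A' * B) = A * B - (B * eps) * A - D * B"
      unfolding D_def by (simp add: algebra_simps)
    moreover have "Ik m (Suc k) (A * B - (B * eps) * A - D * B)"
      by (intro Ik_diff Suc.prems Ik_mult_right s3 Ik_J) (simp add: DJ)
    ultimately have "Ik m (Suc k) (smult 3 (A' * B))" by simp
    then have "Ik m k (A' * B)" by (rule Ik_tors[OF m])
    then have "Ik m k (phi A' * B)" by (rule Suc.IH)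
    then show ?thesis by (rule Ik_smult3)
  qed
  have "phi A * (1 - phi eps) = phi (A * (1 - eps))" by (simp add: phi_mult phi_diff phi_1)
  also have "\<dots> = smult 3 (phi A') + phi D" unfolding D_def by (simp add: phi_add phi_diff phi_smult)
  finally have f: "phi A * (1 - phi eps) = smult 3 (phi A') + phi D" .
  have "phi A * B = phi A * (B * eps) + (smult 3 (phi A' * B) + phi D * B) + phi A * (phi eps - eps) * B"
  proof -
    have "phi A * B = phi A * (B * eps) + phi A * (1 - phi eps) * B + phi A * (phi eps - eps) * B"
      by (simp add: algebra_simps)
    then show ?thesis unfolding f by (simp add: algebra_simps)
  qed
  moreover have "Ik m (Suc k) (phi A * (B * eps) + (smult 3 (phi A' * B) + phi D * B) + phi A * (phi eps - eps) * B)"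
    by (intro Ik_add Ik_mult_left s3 s4 Ik_mult_right s2 Ik_J phi_J DJ)
  ultimately show ?case by simp
qed

definition cj :: "int poly \<Rightarrow> int poly" where "cj p = p \<circ>\<^sub>p monom 1 76"

lemma cj_mult: "cj (p * q) = cj p * cj q" unfolding cj_def by (simp add: pcompose_mult)

lemma cj_J: "Jm m dvd p \<Longrightarrow> Jm m dvd cj p" unfolding cj_def by (rule pcomp_outer_cong)

lemma J_diff_mult: "Jm m dvd (a - b) \<Longrightarrow> Jm m dvd (c * a - c * b)"
  by (metis dvd_mult right_diff_distrib)

lemma sq_sum_one:
  fixes u :: "nat \<Rightarrow> int"
  assumes h: "(\<Sum>l<n. u l * u l) = 1"
  shows "\<exists>s<n. u s * u s = 1 \<and> (\<forall>l<n. l \<noteq> s \<longrightarrow> u l = 0)"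
proof -
  have "\<exists>s<n. u s \<noteq> 0"
  proof (rule ccontr)
    assume "\<not> ?thesis"
    then have "(\<Sum>l<n. u l * u l) = 0" by simp
    then show False using h by simp
  qed
  then obtain s where s: "s < n" "u s \<noteq> 0" by blast
  have split: "(\<Sum>l<n. u l * u l) = u s * u s + (\<Sum>l\<in>{..<n} - {s}. u l * u l)"
    using s(1) by (simp add: sum.remove)
  have nn: "(\<Sum>l\<in>{..<n} - {s}. u l * u l) \<ge> 0" by (rule sum_nonneg) simp
  have pos: "u s * u s \<ge> 1" using s(2) by (metis int_one_le_iff_zero_less zero_less_mult_iff linorder_neqE_linordered_idom not_less)
  have 1: "u s * u s = 1" using split nn pos h by linarith
  have 2: "(\<Sum>l\<in>{..<n} - {s}. u l * u l) = 0" using split 1 h by linarith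
  have "\<forall>l\<in>{..<n} - {s}. u l * u l = 0"
    using 2 by (subst (asm) sum_nonneg_eq_0_iff) auto
  then have "\<forall>l<n. l \<noteq> s \<longrightarrow> u l = 0" by auto
  with 1 s(1) show ?thesis by blast
qed

lemma rs_single: "s < n \<Longrightarrow> (\<forall>l<n. l \<noteq> s \<longrightarrow> u l = 0) \<Longrightarrow> rs n u = monom (u s) s"
proof -
  assume s: "s < n" and z: "\<forall>l<n. l \<noteq> s \<longrightarrow> u l = 0"
  have "rs n u = monom (u s) s + (\<Sum>i\<in>{..<n} - {s}. monom (u i) i)"
    unfolding rs_def using s by (simp add: sum.remove)
  also have "(\<Sum>i\<in>{..<n} - {s}. monom (u i) i) = 0" using z by (intro sum.neutral) auto
  finally show ?thesis by simp
qed

lemma one_rs: "(1::int poly) = rs 77 (\<lambda>j. if j = 0 then 1 else 0)"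
proof -
  have "rs 77 (\<lambda>j. if j = 0 then 1 else 0) = monom 1 0"
    by (subst rs_single[of 0]) auto
  then show ?thesis by (simp add: one_pCons monom_0)
qed

lemma ac0: "ac m u 0 = (\<Sum>l<m. u l * u l)"
  unfolding ac_def by (intro sum.cong) auto

lemma fer77: "Ik 77 1 ((p::int poly) ^ (3 ^ 30) - p)"
proof (rule fermat_gen)
  have "(3::nat) ^ 30 - 1 = 77 * 2673910806424" by simp
  then show "77 dvd ((3::nat) ^ 30 - 1)" by (metis dvd_triv_left)
qed simp

lemma multiplier:
  assumes EE: "Jm 77 dvd (E * cj E - 81)"
  shows "\<exists>\<sigma> s. \<sigma> * \<sigma> = 1 \<and> s < 77 \<and> Jm 77 dvd (phi E - monom \<sigma> s * E)"
proof -
  have m: "(77::nat) > 0" by simp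
  have I4: "Ik 77 4 (E * cj E)"
  proof -
    have "E * cj E - smult (3 ^ 4) 1 = E * cj E - 81" by (simp add: numeral_poly)
    then show ?thesis unfolding Ik_def using EE by metis
  qed
  have "Ik 77 4 (phi E * cj E)" by (rule valuation[OF m _ fer77 I4]) simp
  then obtain U where U: "Jm 77 dvd (phi E * cj E - smult (3 ^ 4) U)" unfolding Ik_def by blast
  define Z where "Z = phi E * cj E"
  have ZU: "Jm 77 dvd (Z - smult 81 U)" using U unfolding Z_def by simp
  have cjphi: "cj (phi E) = phi (cj E)" unfolding cj_def phi_def
    by (simp add: pcompose_assoc[symmetric] monom_pcomp_monom)
  have cjcj: "Jm 77 dvd (cj (cj E) - E)"
  proof -
    have "cj (cj E) = E \<circ>\<^sub>p monom 1 (76 * 76)" unfolding cj_def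
      by (simp add: pcompose_assoc[symmetric] monom_pcomp_monom)
    moreover have "Jm 77 dvd (E \<circ>\<^sub>p monom 1 (76 * 76) - E \<circ>\<^sub>p monom 1 1)"
      by (rule pcomp_inner_cong, rule monom_cong) simp
    ultimately show ?thesis by (simp add: pcomp_x1)
  qed
  define X where "X = phi E * phi (cj E)"
  define Y where "Y = cj E * cj (cj E)"
  have X81: "Jm 77 dvd (X - 81)"
  proof -
    have p81: "phi 81 = 81" unfolding phi_def by (simp only: numeral_poly pcompose_const)
    have "X - 81 = phi (E * cj E - 81)" unfolding X_def by (simp only: phi_diff phi_mult p81)
    then show ?thesis using phi_J[OF EE] by simp
  qed
  have Y81: "Jm 77 dvd (Y - 81)"
  proof -
    have "Y - 81 = cj E * (cj (cj E) - E) + (E * cj E - 81)" unfolding Y_def by (simp add: algebra_simps)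
    then show ?thesis using cjcj EE by (metis dvd_add dvd_mult)
  qed
  have ZcZ: "Z * cj Z = X * Y" unfolding Z_def X_def Y_def cj_mult cjphi by (simp add: algebra_simps)
  have Z6561: "Jm 77 dvd (Z * cj Z - 6561)"
  proof -
    have "X * Y - 6561 = (X - 81) * Y + 81 * (Y - 81)" by (simp add: algebra_simps)
    then show ?thesis unfolding ZcZ using X81 Y81 by (metis dvd_add dvd_mult dvd_mult2)
  qed
  have cjZ: "Jm 77 dvd (cj Z - smult 81 (cj U))"
  proof -
    have "cj Z - smult 81 (cj U) = cj (Z - smult 81 U)" unfolding cj_def by (simp add: pcompose_diff pcompose_smult)
    then show ?thesis using cj_J[OF ZU] by simp
  qed
  have ZZU: "Jm 77 dvd (Z * cj Z - smult 6561 (U * cj U))"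
  proof -
    have "Z * cj Z - smult 6561 (U * cj U) = (Z - smult 81 U) * cj Z + smult 81 U * (cj Z - smult 81 (cj U))"
      by (simp add: algebra_simps smult_diff_right)
    then show ?thesis using ZU cjZ by (metis dvd_add dvd_mult dvd_mult2)
  qed
  have "Jm 77 dvd smult 6561 (U * cj U - 1)"
  proof -
    have "smult 6561 (U * cj U - 1) = (Z * cj Z - 6561) - (Z * cj Z - smult 6561 (U * cj U))"
      by (simp add: smult_diff_right numeral_poly)
    then show ?thesis using Z6561 ZZU by (metis dvd_diff)
  qed
  then have UU: "Jm 77 dvd (U * cj U - 1)" by (rule Jm_cancel[OF m, rotated]) simp
  obtain u where u: "Jm 77 dvd (U - rs 77 u)" using reduce_rs[OF m] by blast
  have a1: "Jm 77 dvd (U * cj U - rs 77 u * cj (rs 77 u))"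
  proof -
    have "cj U - cj (rs 77 u) = cj (U - rs 77 u)" unfolding cj_def by (simp add: pcompose_diff)
    then have c: "Jm 77 dvd (cj U - cj (rs 77 u))" using cj_J[OF u] by simp
    have "U * cj U - rs 77 u * cj (rs 77 u) = (U - rs 77 u) * cj U + rs 77 u * (cj U - cj (rs 77 u))"
      by (simp add: algebra_simps)
    then show ?thesis using u c by (metis dvd_add dvd_mult dvd_mult2)
  qed
  have a2: "Jm 77 dvd (rs 77 u * cj (rs 77 u) - rs 77 (ac 77 u))"
    using AC[OF m, of u] unfolding cj_def by simp
  have "Jm 77 dvd ((U * cj U - 1) - (U * cj U - rs 77 u * cj (rs 77 u)) - (rs 77 u * cj (rs 77 u) - rs 77 (ac 77 u)))"
    by (rule dvd_diff[OF dvd_diff[OF UU a1] a2])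
  moreover have "(U * cj U - 1) - (U * cj U - rs 77 u * cj (rs 77 u)) - (rs 77 u * cj (rs 77 u) - rs 77 (ac 77 u))
     = rs 77 (ac 77 u) - 1" by simp
  ultimately have "Jm 77 dvd (rs 77 (ac 77 u) - 1)" by simp
  then have "Jm 77 dvd (rs 77 (ac 77 u) - rs 77 (\<lambda>j. if j = 0 then 1 else 0))"
    unfolding one_rs[symmetric] .
  from rs_unique[OF m this, of 0] have "ac 77 u 0 = 1" by simp
  then have "(\<Sum>l<77. u l * u l) = 1" by (simp add: ac0)
  then obtain s where s: "s < 77" "u s * u s = 1" "\<forall>l<77. l \<noteq> s \<longrightarrow> u l = 0"
    using sq_sum_one by blast
  have rsu: "rs 77 u = monom (u s) s" by (rule rs_single[OF s(1) s(3)])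
  have "Jm 77 dvd smult 81 (phi E - monom (u s) s * E)"
  proof -
    have t1: "Jm 77 dvd (Z * E - smult 81 (phi E))"
    proof -
      have s81: "smult 81 (phi E) = phi E * 81" by (simp only: smult_cm numeral_poly mult.commute)
      have "Z * E - smult 81 (phi E) = phi E * (E * cj E - 81)" unfolding Z_def s81
        by (simp add: algebra_simps)
      then show ?thesis by (simp only: dvd_mult[OF EE])
    qed
    have t2: "Jm 77 dvd (Z * E - smult 81 U * E)"
    proof -
      have "Z * E - smult 81 U * E = (Z - smult 81 U) * E" by (simp add: algebra_simps)
      then show ?thesis by (simp only: dvd_mult2[OF ZU])
    qed
    have t3: "Jm 77 dvd (smult 81 U * E - smult 81 (rs 77 u * E))"
    proof -
      have "smult 81 U * E - smult 81 (rs 77 u * E) = smult 81 ((U - rs 77 u) * E)"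
        by (simp add: algebra_simps smult_diff_right)
      then show ?thesis by (simp only: dvd_smult[OF dvd_mult2[OF u]])
    qed
    have "smult 81 (phi E - monom (u s) s * E)
        = - (Z * E - smult 81 (phi E)) + (Z * E - smult 81 U * E) + (smult 81 U * E - smult 81 (rs 77 u * E))"
      unfolding rsu by (simp add: algebra_simps smult_diff_right)
    then show ?thesis by (simp only: dvd_add[OF dvd_add[OF iffD2[OF dvd_minus_iff t1] t2] t3])
  qed
  then have "Jm 77 dvd (phi E - monom (u s) s * E)" by (rule Jm_cancel[OF m, rotated]) simp
  then show ?thesis using s by blast
qed

lemma split_sum: "(\<Sum>i<2*(n::nat). (f::nat \<Rightarrow> int poly) i) = (\<Sum>i<n. f i) + (\<Sum>i<n. f (i + n))"
proof -
  have "(\<Sum>i<2*n. f i) = sum f {0..<n} + sum f {n..<2*n}"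
    by (simp add: lessThan_atLeast0 sum.atLeastLessThan_concat)
  also have "sum f {n..<2*n} = sum f {0+n..<n+n}" by (simp add: mult_2)
  also have "\<dots> = (\<Sum>i = 0..<n. f (i + n))" by (rule sum.shift_bounds_nat_ivl)
  finally show ?thesis by (simp add: lessThan_atLeast0)
qed

lemma cw_to_E:
  assumes cw: "circulant_weighing_matrix 154 81 W"
  shows "Jm 77 dvd (rs 77 (\<lambda>i. W 0 i + W 0 (i + 77)) * cj (rs 77 (\<lambda>i. W 0 i + W 0 (i + 77))) - 81)
         \<and> (\<forall>i<77. \<bar>W 0 i + W 0 (i + 77)\<bar> \<le> 2)"
proof -
  define w where "w = W 0"
  define e where "e = (\<lambda>i. W 0 i + W 0 (i + 77))"
  have circ: "\<forall>i<154. \<forall>j<154. W i j = W 0 (nat ((int j - int i) mod int 154))"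
    using cw unfolding circulant_weighing_matrix_def circulant_def by blast
  have vals: "\<forall>i<154. \<forall>j<154. W i j \<in> {0, 1, -1}"
    using cw unfolding circulant_weighing_matrix_def by blast
  have orth: "\<forall>i<154. \<forall>j<154. (\<Sum>l<154. W i l * W j l) = (if i = j then int 81 else 0)"
    using cw unfolding circulant_weighing_matrix_def by blast
  have acw: "ac 154 w r = (if r = 0 then 81 else 0)" if r: "r < 154" for r
  proof -
    have "ac 154 w r = (\<Sum>l<154. W 0 l * W r l)"
      unfolding ac_def w_def
    proof (rule sum.cong[OF refl])
      fix l assume "l \<in> {..<154::nat}"
      then have l: "l < 154" by simp
      have "W r l = W 0 (nat ((int l - int r) mod int 154))" using circ[rule_format, OF r l] .
      then show "W 0 l * W 0 (nat ((int l - int r) mod int 154)) = W 0 l * W r l" by simp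
    qed
    also have "\<dots> = (if 0 = r then int 81 else 0)" using orth[rule_format, of 0 r] r by simp
    finally show ?thesis by auto
  qed
  have rsac: "rs 154 (ac 154 w) = 81"
  proof -
    have "rs 154 (ac 154 w) = monom (ac 154 w 0) 0" by (rule rs_single) (auto simp: acw)
    also have "\<dots> = 81" by (simp add: acw monom_0 numeral_poly)
    finally show ?thesis .
  qed
  define P where "P = rs 154 w"
  define E where "E = rs 77 e"
  have AC154: "Jm 154 dvd (P * (P \<circ>\<^sub>p monom 1 153) - 81)"
    using AC[of 154 w] unfolding P_def rsac by simp
  have J77_154: "Jm 77 dvd Jm 154"
    using Jm_dvd_monom_mult[of 77 2] unfolding Jm_def by simp
  have PP: "Jm 77 dvd (P * (P \<circ>\<^sub>p monom 1 153) - 81)" by (rule dvd_trans[OF J77_154 AC154])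
  have PE: "Jm 77 dvd (P - E)"
  proof -
    have P2: "P = (\<Sum>i<77. monom (w i) i) + (\<Sum>i<77. monom (w (i + 77)) (i + 77))"
      unfolding P_def rs_def using split_sum[of "\<lambda>i. monom (w i) i" 77] by simp
    have E2: "E = (\<Sum>i<77. monom (w i) i) + (\<Sum>i<77. monom (w (i + 77)) i)"
      unfolding E_def rs_def e_def w_def by (simp add: add_monom[symmetric] sum.distrib)
    have "P - E = (\<Sum>i<77. monom (w (i + 77)) (i + 77)) - (\<Sum>i<77. monom (w (i + 77)) i)"
      unfolding P2 E2 by simp
    moreover have "Jm 77 dvd ((\<Sum>i<77. monom (w (i + 77)) (i + 77)) - (\<Sum>i<77. monom (w (i + 77)) i))"
      by (rule dvd_sum_diff, rule monom_cong) simp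
    ultimately show ?thesis by simp
  qed
  have PsE: "Jm 77 dvd (P \<circ>\<^sub>p monom 1 153 - cj E)"
  proof -
    have a: "Jm 77 dvd (P \<circ>\<^sub>p monom 1 153 - E \<circ>\<^sub>p monom 1 153)"
      using pcomp_outer_cong[OF PE, of 153] by (simp add: pcompose_diff)
    have b: "Jm 77 dvd (E \<circ>\<^sub>p monom 1 153 - E \<circ>\<^sub>p monom 1 76)"
      by (rule pcomp_inner_cong, rule monom_cong) simp
    have "P \<circ>\<^sub>p monom 1 153 - cj E = (P \<circ>\<^sub>p monom 1 153 - E \<circ>\<^sub>p monom 1 153) + (E \<circ>\<^sub>p monom 1 153 - E \<circ>\<^sub>p monom 1 76)"
      unfolding cj_def by simp
    then show ?thesis using dvd_add[OF a b] by simp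
  qed
  have "E * cj E - 81 = (P * (P \<circ>\<^sub>p monom 1 153) - 81) - (P - E) * (P \<circ>\<^sub>p monom 1 153) - E * (P \<circ>\<^sub>p monom 1 153 - cj E)"
    by (simp add: algebra_simps)
  then have main: "Jm 77 dvd (E * cj E - 81)"
    by (simp only: dvd_diff[OF dvd_diff[OF PP dvd_mult2[OF PE]] dvd_mult[OF PsE]])
  have bnd: "\<forall>i<77. \<bar>W 0 i + W 0 (i + 77)\<bar> \<le> 2"
  proof (intro allI impI)
    fix i :: nat assume i: "i < 77"
    have i2: "i + 77 < 154" using i by simp
    have "W 0 i \<in> {0, 1, -1}" using vals[rule_format, of 0 i] i by simp
    moreover have "W 0 (i + 77) \<in> {0, 1, -1}" using vals[rule_format, of 0 "i + 77"] i2 by simp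
    ultimately show "\<bar>W 0 i + W 0 (i + 77)\<bar> \<le> 2" by auto
  qed
  show ?thesis using main bnd unfolding E_def e_def by simp
qed

lemma int_cases5: "\<bar>x::int\<bar> \<le> 2 \<Longrightarrow> x = -2 \<or> x = -1 \<or> x = 0 \<or> x = 1 \<or> x = 2" by arith

lemma final_lin:
  fixes \<alpha> \<beta> \<gamma> c d x y :: int
  assumes "0 \<le> \<alpha>" "\<alpha> \<le> 4" "0 \<le> \<beta>" "\<beta> \<le> 4" "0 \<le> \<gamma>"
    and hx: "\<bar>x\<bar> \<le> 2" and hy: "\<bar>y\<bar> \<le> 2" and hc: "\<bar>c\<bar> \<le> 2" and hd: "\<bar>d\<bar> \<le> 2"
    and e1: "\<alpha> + 6 * \<beta> + 5 * (c * c) + 5 * (d * d) + 30 * (x * x) + 30 * (y * y) = 81"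
    and e2: "\<gamma> + 5 * ((6 * x + d) * (6 * x + d)) + 5 * ((6 * y + c) * (6 * y + c)) = 81"
  shows False
  using int_cases5[OF hx] int_cases5[OF hy] int_cases5[OF hc] int_cases5[OF hd] e1 e2 assms(1-5)
  by (elim disjE) (simp_all, linarith?)

lemma sq_le4: "\<bar>a::int\<bar> \<le> 2 \<Longrightarrow> a * a \<le> 4"
  using int_cases5[of a] by auto

lemma sum77: "(\<Sum>l<77. (h::nat \<Rightarrow> int) l) = h 0 + h 1 + h 2 + h 3 + h 4 + h 5 + h 6 + h 7 + h 8 + h 9 + h 10 + h 11 + h 12 + h 13 + h 14 + h 15 + h 16 + h 17 + h 18 + h 19 + h 20 + h 21 + h 22 + h 23 + h 24 + h 25 + h 26 + h 27 + h 28 + h 29 + h 30 + h 31 + h 32 + h 33 + h 34 + h 35 + h 36 + h 37 + h 38 + h 39 + h 40 + h 41 + h 42 + h 43 + h 44 + h 45 + h 46 + h 47 + h 48 + h 49 + h 50 + h 51 + h 52 + h 53 + h 54 + h 55 + h 56 + h 57 + h 58 + h 59 + h 60 + h 61 + h 62 + h 63 + h 64 + h 65 + h 66 + h 67 + h 68 + h 69 + h 70 + h 71 + h 72 + h 73 + h 74 + h 75 + h 76"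
  by (simp add: numeral_eq_Suc)

lemma sum11: "(\<Sum>l<11. (h::nat \<Rightarrow> int) l) = h 0 + h 1 + h 2 + h 3 + h 4 + h 5 + h 6 + h 7 + h 8 + h 9 + h 10"
  by (simp add: numeral_eq_Suc)

lemma sum7: "(\<Sum>l<7. (h::nat \<Rightarrow> int) l) = h 0 + h 1 + h 2 + h 3 + h 4 + h 5 + h 6"
  by (simp add: numeral_eq_Suc)

lemma final_concrete:
  fixes f :: "nat \<Rightarrow> int"
  assumes bnd: "\<forall>j<77. \<bar>f j\<bar> \<le> 2" and inv: "\<forall>j<77. f (26 * j mod 77) = f j"
    and s1: "(\<Sum>l<77. f l * f l) = 81"
    and s2: "(\<Sum>r<11. (\<Sum>t<7. f (r + t * 11)) * (\<Sum>t<7. f (r + t * 11))) = 81"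
  shows False
proof -
  have o1: "f 26 = f 1" using inv[rule_format, of 1] by simp
  have o2: "f 60 = f 26" using inv[rule_format, of 26] by simp
  have o3: "f 20 = f 60" using inv[rule_format, of 60] by simp
  have o4: "f 58 = f 20" using inv[rule_format, of 20] by simp
  have o5: "f 45 = f 58" using inv[rule_format, of 58] by simp
  have o6: "f 15 = f 45" using inv[rule_format, of 45] by simp
  have o7: "f 5 = f 15" using inv[rule_format, of 15] by simp
  have o8: "f 53 = f 5" using inv[rule_format, of 5] by simp
  have o9: "f 69 = f 53" using inv[rule_format, of 53] by simp
  have o10: "f 23 = f 69" using inv[rule_format, of 69] by simp
  have o11: "f 59 = f 23" using inv[rule_format, of 23] by simp
  have o12: "f 71 = f 59" using inv[rule_format, of 59] by simp
  have o13: "f 75 = f 71" using inv[rule_format, of 71] by simp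
  have o14: "f 25 = f 75" using inv[rule_format, of 75] by simp
  have o15: "f 34 = f 25" using inv[rule_format, of 25] by simp
  have o16: "f 37 = f 34" using inv[rule_format, of 34] by simp
  have o17: "f 38 = f 37" using inv[rule_format, of 37] by simp
  have o18: "f 64 = f 38" using inv[rule_format, of 38] by simp
  have o19: "f 47 = f 64" using inv[rule_format, of 64] by simp
  have o20: "f 67 = f 47" using inv[rule_format, of 47] by simp
  have o21: "f 48 = f 67" using inv[rule_format, of 67] by simp
  have o22: "f 16 = f 48" using inv[rule_format, of 48] by simp
  have o23: "f 31 = f 16" using inv[rule_format, of 16] by simp
  have o24: "f 36 = f 31" using inv[rule_format, of 31] by simp
  have o25: "f 12 = f 36" using inv[rule_format, of 36] by simp
  have o26: "f 4 = f 12" using inv[rule_format, of 12] by simp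
  have o27: "f 27 = f 4" using inv[rule_format, of 4] by simp
  have o28: "f 9 = f 27" using inv[rule_format, of 27] by simp
  have o29: "f 3 = f 9" using inv[rule_format, of 9] by simp
  have o30: "f 52 = f 2" using inv[rule_format, of 2] by simp
  have o31: "f 43 = f 52" using inv[rule_format, of 52] by simp
  have o32: "f 40 = f 43" using inv[rule_format, of 43] by simp
  have o33: "f 39 = f 40" using inv[rule_format, of 40] by simp
  have o34: "f 13 = f 39" using inv[rule_format, of 39] by simp
  have o35: "f 30 = f 13" using inv[rule_format, of 13] by simp
  have o36: "f 10 = f 30" using inv[rule_format, of 30] by simp
  have o37: "f 29 = f 10" using inv[rule_format, of 10] by simp
  have o38: "f 61 = f 29" using inv[rule_format, of 29] by simp
  have o39: "f 46 = f 61" using inv[rule_format, of 61] by simp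
  have o40: "f 41 = f 46" using inv[rule_format, of 46] by simp
  have o41: "f 65 = f 41" using inv[rule_format, of 41] by simp
  have o42: "f 73 = f 65" using inv[rule_format, of 65] by simp
  have o43: "f 50 = f 73" using inv[rule_format, of 73] by simp
  have o44: "f 68 = f 50" using inv[rule_format, of 50] by simp
  have o45: "f 74 = f 68" using inv[rule_format, of 68] by simp
  have o46: "f 76 = f 74" using inv[rule_format, of 74] by simp
  have o47: "f 51 = f 76" using inv[rule_format, of 76] by simp
  have o48: "f 17 = f 51" using inv[rule_format, of 51] by simp
  have o49: "f 57 = f 17" using inv[rule_format, of 17] by simp
  have o50: "f 19 = f 57" using inv[rule_format, of 57] by simp
  have o51: "f 32 = f 19" using inv[rule_format, of 19] by simp
  have o52: "f 62 = f 32" using inv[rule_format, of 32] by simp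
  have o53: "f 72 = f 62" using inv[rule_format, of 62] by simp
  have o54: "f 24 = f 72" using inv[rule_format, of 72] by simp
  have o55: "f 8 = f 24" using inv[rule_format, of 24] by simp
  have o56: "f 54 = f 8" using inv[rule_format, of 8] by simp
  have o57: "f 18 = f 54" using inv[rule_format, of 54] by simp
  have o58: "f 6 = f 18" using inv[rule_format, of 18] by simp
  have o59: "f 28 = f 7" using inv[rule_format, of 7] by simp
  have o60: "f 35 = f 28" using inv[rule_format, of 28] by simp
  have o61: "f 63 = f 35" using inv[rule_format, of 35] by simp
  have o62: "f 21 = f 63" using inv[rule_format, of 63] by simp
  have o63: "f 55 = f 11" using inv[rule_format, of 11] by simp
  have o64: "f 44 = f 55" using inv[rule_format, of 55] by simp
  have o65: "f 66 = f 44" using inv[rule_format, of 44] by simp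
  have o66: "f 22 = f 66" using inv[rule_format, of 66] by simp
  have o67: "f 33 = f 22" using inv[rule_format, of 22] by simp
  have o68: "f 56 = f 14" using inv[rule_format, of 14] by simp
  have o69: "f 70 = f 56" using inv[rule_format, of 56] by simp
  have o70: "f 49 = f 70" using inv[rule_format, of 70] by simp
  have o71: "f 42 = f 49" using inv[rule_format, of 49] by simp
  note orb = o1 o2 o3 o4 o5 o6 o7 o8 o9 o10 o11 o12 o13 o14 o15 o16 o17 o18 o19 o20 o21 o22 o23 o24 o25 o26 o27 o28 o29 o30 o31 o32 o33 o34 o35 o36 o37 o38 o39 o40 o41 o42 o43 o44 o45 o46 o47 o48 o49 o50 o51 o52 o53 o54 o55 o56 o57 o58 o59 o60 o61 o62 o63 o64 o65 o66 o67 o68 o69 o70 o71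

  define g where "g r = (\<Sum>t<7. f (r + t * 11))" for r
  have s2': "(\<Sum>r<11. g r * g r) = 81" using s2 unfolding g_def .
  have "(\<Sum>l<77. f l * f l) = f 0 * f 0 + 6 * (f 11 * f 11) + 5 * (f 7 * f 7) + 5 * (f 14 * f 14)
          + 30 * (f 1 * f 1) + 30 * (f 2 * f 2)"
    by (simp add: sum77 orb)
  then have e1: "f 0 * f 0 + 6 * (f 11 * f 11) + 5 * (f 7 * f 7) + 5 * (f 14 * f 14)
          + 30 * (f 1 * f 1) + 30 * (f 2 * f 2) = 81" using s1 by simp
  have gQ: "g 1 = 6 * f 1 + f 14" "g 3 = 6 * f 1 + f 14" "g 4 = 6 * f 1 + f 14"
      "g 5 = 6 * f 1 + f 14" "g 9 = 6 * f 1 + f 14"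
    unfolding g_def by (simp_all add: sum7 orb)
  have gN: "g 2 = 6 * f 2 + f 7" "g 6 = 6 * f 2 + f 7" "g 7 = 6 * f 2 + f 7"
      "g 8 = 6 * f 2 + f 7" "g 10 = 6 * f 2 + f 7"
    unfolding g_def by (simp_all add: sum7 orb numeral_2_eq_2)
  have g0: "g 0 = f 0 + 6 * f 11" unfolding g_def by (simp add: sum7 orb)
  have "(\<Sum>r<11. g r * g r) = g 0 * g 0 + 5 * ((6 * f 1 + f 14) * (6 * f 1 + f 14))
      + 5 * ((6 * f 2 + f 7) * (6 * f 2 + f 7))"
  proof -
    have "(\<Sum>r<11. g r * g r) = g 0 * g 0 + g 1 * g 1 + g 2 * g 2 + g 3 * g 3 + g 4 * g 4 + g 5 * g 5
       + g 6 * g 6 + g 7 * g 7 + g 8 * g 8 + g 9 * g 9 + g 10 * g 10" by (rule sum11)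
    also have "\<dots> = g 0 * g 0 + 5 * ((6 * f 1 + f 14) * (6 * f 1 + f 14))
      + 5 * ((6 * f 2 + f 7) * (6 * f 2 + f 7))" unfolding gQ gN by linarith
    finally show ?thesis .
  qed
  then have e2: "(f 0 + 6 * f 11) * (f 0 + 6 * f 11) + 5 * ((6 * f 1 + f 14) * (6 * f 1 + f 14))
      + 5 * ((6 * f 2 + f 7) * (6 * f 2 + f 7)) = 81" using s2' g0 by simp
  have b: "\<bar>f 0\<bar> \<le> 2" "\<bar>f 11\<bar> \<le> 2" "\<bar>f 7\<bar> \<le> 2" "\<bar>f 14\<bar> \<le> 2"
    "\<bar>f 1\<bar> \<le> 2" "\<bar>f 2\<bar> \<le> 2" using bnd by auto
  show False
  proof (rule final_lin[of "f 0 * f 0" "f 11 * f 11" "(f 0 + 6 * f 11) * (f 0 + 6 * f 11)" "f 1" "f 2" "f 7" "f 14"])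
    show "0 \<le> f 0 * f 0" by simp
    show "f 0 * f 0 \<le> 4" by (rule sq_le4[OF b(1)])
    show "0 \<le> f 11 * f 11" by simp
    show "f 11 * f 11 \<le> 4" by (rule sq_le4[OF b(2)])
    show "0 \<le> (f 0 + 6 * f 11) * (f 0 + 6 * f 11)" by simp
  qed (use b e1 e2 in auto)
qed

lemma shift_rs:
  assumes m: "m > 0" and c: "c < m"
  shows "Jm m dvd (monom 1 c * rs m a - rs m (\<lambda>j. a ((j + (m - c)) mod m)))"
proof -
  have 1: "monom 1 c * rs m a = (\<Sum>i<m. monom (a i) (i + c))"
    unfolding rs_def by (simp add: sum_distrib_left mult_monom add.commute)
  have 2: "Jm m dvd ((\<Sum>i<m. monom (a i) (i + c)) - (\<Sum>i<m. monom (a i) ((i + c) mod m)))"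
    by (rule dvd_sum_diff, rule monom_cong) simp
  have id1: "((i + c) mod m + (m - c)) mod m = i" if i: "i < m" for i
  proof -
    have "((i + c) mod m + (m - c)) mod m = (i + c + (m - c)) mod m" by (simp add: mod_add_left_eq)
    also have "i + c + (m - c) = i + m" using c by simp
    finally show ?thesis using i by simp
  qed
  have id2: "((j + (m - c)) mod m + c) mod m = j" if j: "j < m" for j
  proof -
    have "((j + (m - c)) mod m + c) mod m = (j + (m - c) + c) mod m" by (simp add: mod_add_left_eq)
    also have "j + (m - c) + c = j + m" using c by simp
    finally show ?thesis using j by simp
  qed
  have 3: "(\<Sum>i<m. monom (a i) ((i + c) mod m)) = rs m (\<lambda>j. a ((j + (m - c)) mod m))"
    unfolding rs_def
    by (rule sum.reindex_bij_witness[where i = "\<lambda>j. (j + (m - c)) mod m" and j = "\<lambda>i. (i + c) mod m"])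
       (use m in \<open>auto simp: id1 id2\<close>)
  show ?thesis using 2 unfolding 1 3 .
qed

lemma phi_rs: "Jm 77 dvd (phi (rs 77 a) - rs 77 (\<lambda>j. a ((26 * j) mod 77)))"
proof -
  have 1: "phi (rs 77 a) = (\<Sum>i<77. monom (a i) (i * 3))"
    unfolding phi_def rs_def by (simp add: pcompose_sum monom_pcomp_monom)
  have 2: "Jm 77 dvd ((\<Sum>i<77. monom (a i) (i * 3)) - (\<Sum>i<77. monom (a i) ((3 * i) mod 77)))"
    by (rule dvd_sum_diff, rule monom_cong) (simp add: mult.commute)
  have id1: "(26 * ((3 * i) mod 77)) mod 77 = i" if i: "i < 77" for i :: nat
  proof -
    have "(26 * ((3 * i) mod 77)) mod 77 = (26 * (3 * i)) mod 77" by (simp add: mod_mult_right_eq)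
    also have "26 * (3 * i) = i + i * 77" by simp
    also have "(i + i * 77) mod 77 = i mod 77" by (rule mod_mult_self1)
    finally show ?thesis using i by simp
  qed
  have id2: "(3 * ((26 * j) mod 77)) mod 77 = j" if j: "j < 77" for j :: nat
  proof -
    have "(3 * ((26 * j) mod 77)) mod 77 = (3 * (26 * j)) mod 77" by (simp add: mod_mult_right_eq)
    also have "3 * (26 * j) = j + j * 77" by simp
    also have "(j + j * 77) mod 77 = j mod 77" by (rule mod_mult_self1)
    finally show ?thesis using j by simp
  qed
  have 3: "(\<Sum>i<77. monom (a i) ((3 * i) mod 77)) = rs 77 (\<lambda>j. a ((26 * j) mod 77))"
    unfolding rs_def
    by (rule sum.reindex_bij_witness[where i = "\<lambda>j. (26 * j) mod 77" and j = "\<lambda>i. (3 * i) mod 77"])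
       (auto simp: id1 id2)
  show ?thesis using 2 unfolding 1 3 .
qed

lemma mod11_rs: "Jm 11 dvd (rs 77 f - rs 11 (\<lambda>r. \<Sum>t<7. f (r + t * 11)))"
proof -
  have 1: "rs 77 f = (\<Sum>t<7. \<Sum>r<11. monom (f (r + t * 11)) (r + t * 11))"
  proof -
    have "rs 77 f = (\<Sum>t<7. sum (\<lambda>i. monom (f i) i) {t * 11..<t * 11 + 11})"
      unfolding rs_def using sum.nat_group[of "\<lambda>i. monom (f i) i" 11 7] by simp
    also have "\<dots> = (\<Sum>t<7. \<Sum>r<11. monom (f (r + t * 11)) (r + t * 11))"
    proof (rule sum.cong[OF refl])
      fix t :: nat
      have "{t * 11..<t * 11 + 11} = {0 + t * 11..<11 + t * 11}" by (simp add: add.commute)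
      then show "sum (\<lambda>i. monom (f i) i) {t * 11..<t * 11 + 11} = (\<Sum>r<11. monom (f (r + t * 11)) (r + t * 11))"
        by (simp only: sum.shift_bounds_nat_ivl lessThan_atLeast0)
    qed
    finally show ?thesis .
  qed
  have 2: "Jm 11 dvd ((\<Sum>t<7. \<Sum>r<11. monom (f (r + t * 11)) (r + t * 11)) - (\<Sum>t<7. \<Sum>r<11. monom (f (r + t * 11)) r))"
    by (rule dvd_sum_diff, rule dvd_sum_diff, rule monom_cong) simp
  have 3: "(\<Sum>t<7. \<Sum>r<11. monom (f (r + t * 11)) r) = rs 11 (\<lambda>r. \<Sum>t<7. f (r + t * 11))"
    unfolding rs_def by (subst sum.swap) (simp add: monom_sum)
  show ?thesis using 2 unfolding 1 3 .
qed

lemma poly_J1: "Jm m dvd p \<Longrightarrow> poly p 1 = 0"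
proof -
  assume "Jm m dvd p"
  then obtain k where "p = Jm m * k" by blast
  then show ?thesis by (simp add: Jm_def poly_monom)
qed

lemma rs_const: "rs m (\<lambda>j. if j = 0 then c else 0) = [:c:]" if "m > 0"
proof -
  have "rs m (\<lambda>j. if j = 0 then c else 0) = monom c 0" by (subst rs_single[of 0]) (use that in auto)
  then show ?thesis by (simp add: monom_0)
qed

lemma sumsq_from_AC:
  assumes m: "m > 0" and h: "Jm m dvd (rs m f * (rs m f \<circ>\<^sub>p monom 1 (m - 1)) - 81)"
  shows "(\<Sum>l<m. f l * f l) = 81"
proof -
  have a: "Jm m dvd (rs m f * (rs m f \<circ>\<^sub>p monom 1 (m - 1)) - rs m (ac m f))" by (rule AC[OF m])
  have "Jm m dvd ((rs m f * (rs m f \<circ>\<^sub>p monom 1 (m - 1)) - 81) - (rs m f * (rs m f \<circ>\<^sub>p monom 1 (m - 1)) - rs m (ac m f)))"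
    by (rule dvd_diff[OF h a])
  moreover have "(rs m f * (rs m f \<circ>\<^sub>p monom 1 (m - 1)) - 81) - (rs m f * (rs m f \<circ>\<^sub>p monom 1 (m - 1)) - rs m (ac m f))
      = rs m (ac m f) - 81" by algebra
  ultimately have d: "Jm m dvd (rs m (ac m f) - 81)" by simp
  have r81: "rs m (\<lambda>j. if j = 0 then 81 else 0) = 81" using rs_const[OF m, of 81] by (simp add: numeral_poly)
  have "Jm m dvd (rs m (ac m f) - rs m (\<lambda>j. if j = 0 then 81 else 0))" unfolding r81 by (rule d)
  from rs_unique[OF m this, of 0] m have "ac m f 0 = 81" by simp
  then show ?thesis by (simp add: ac0)
qed

theorem corollary1:
  shows "\<not> (\<exists>W. circulant_weighing_matrix 154 81 W)"
proof
  assume "\<exists>W. circulant_weighing_matrix 154 81 W"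
  then obtain W where cw: "circulant_weighing_matrix 154 81 W" by blast
  define e where "e = (\<lambda>i. W 0 i + W 0 (i + 77))"
  define E where "E = rs 77 e"
  have EE: "Jm 77 dvd (E * cj E - 81)" and be: "\<forall>i<77. \<bar>e i\<bar> \<le> 2"
    using cw_to_E[OF cw] unfolding E_def e_def by auto
  obtain \<sigma> s where sig: "\<sigma> * \<sigma> = 1" and s: "s < 77" and mu: "Jm 77 dvd (phi E - monom \<sigma> s * E)"
    using multiplier[OF EE] by blast
  have E1: "poly E 1 * poly E 1 = 81"
  proof -
    have "poly (E * cj E - 81) 1 = 0" by (rule poly_J1[OF EE])
    moreover have "poly (cj E) 1 = poly E 1" unfolding cj_def by (simp add: poly_pcompose poly_monom)
    ultimately show ?thesis by simp
  qed
  have "poly (phi E - monom \<sigma> s * E) 1 = 0" by (rule poly_J1[OF mu])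
  moreover have "poly (phi E) 1 = poly E 1" unfolding phi_def by (simp add: poly_pcompose poly_monom)
  ultimately have "poly E 1 = \<sigma> * poly E 1" by (simp add: poly_monom)
  then have "(1 - \<sigma>) * poly E 1 = 0" by (simp add: algebra_simps)
  moreover have "poly E 1 \<noteq> 0" using E1 by auto
  ultimately have s1: "\<sigma> = 1" by simp
  define c where "c = (38 * s) mod 77"
  have c77: "c < 77" unfolding c_def by simp
  define E' where "E' = monom 1 c * E"
  have phiE': "Jm 77 dvd (phi E' - E')"
  proof -
    have pm: "phi (monom 1 c) = monom 1 (c * 3)" unfolding phi_def by (rule monom_pcomp_monom)
    have a: "Jm 77 dvd (phi E' - monom 1 (c * 3) * (monom 1 s * E))"
      unfolding E'_def phi_mult pm using J_diff_mult[OF mu, of "monom 1 (c * 3)"] s1 by simp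
    have "(2 * c + s) mod 77 = 0 mod 77"
    proof -
      have "(2 * c + s) mod 77 = (2 * (38 * s) + s) mod 77" unfolding c_def by (metis mod_add_left_eq mod_mult_right_eq)
      also have "2 * (38 * s) + s = 77 * s" by simp
      finally show ?thesis by simp
    qed
    then have b0: "Jm 77 dvd (monom 1 (2 * c + s) - monom 1 0)" by (rule monom_cong)
    have b: "Jm 77 dvd (monom 1 (2 * c + s) * E' - E')"
    proof -
      have "monom 1 (2 * c + s) * E' - E' = (monom 1 (2 * c + s) - monom 1 0) * E'" by (simp add: algebra_simps monom_0 one_pCons)
      then show ?thesis using dvd_mult2[OF b0] by simp
    qed
    have "monom 1 (c * 3) * (monom 1 s * E) = monom 1 (2 * c + s) * E'"
      unfolding E'_def by (simp add: mult_monom mult.assoc[symmetric] algebra_simps)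
    then show ?thesis using dvd_add[OF a b] by simp
  qed
  have EE': "Jm 77 dvd (E' * cj E' - 81)"
  proof -
    have cm: "cj (monom 1 c) = monom 1 (c * 76)" unfolding cj_def by (rule monom_pcomp_monom)
    have "E' * cj E' = monom 1 (77 * c) * (E * cj E)"
      unfolding E'_def cj_mult cm by (simp add: mult_monom algebra_simps)
    then have eq: "E' * cj E' - 81 = monom 1 (77 * c) * (E * cj E - 81) + 81 * (monom 1 (77 * c) - 1)"
      by (simp add: algebra_simps)
    have "Jm 77 dvd (monom 1 (77 * c) - 1)" by (rule Jm_dvd_monom_mult)
    then show ?thesis unfolding eq by (intro dvd_add dvd_mult EE)
  qed
  define f where "f = (\<lambda>j. e ((j + (77 - c)) mod 77))"
  define F where "F = rs 77 f"
  have EF: "Jm 77 dvd (E' - F)" unfolding E'_def F_def f_def E_def by (rule shift_rs) (use c77 in auto)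
  have bf: "\<forall>j<77. \<bar>f j\<bar> \<le> 2" unfolding f_def using be by simp
  have phiF: "Jm 77 dvd (phi F - F)"
  proof -
    have "phi F - F = - phi (E' - F) + (phi E' - E') + (E' - F)" by (simp add: phi_diff)
    then show ?thesis using phi_J[OF EF] phiE' EF by (metis dvd_add dvd_minus_iff)
  qed
  have FF: "Jm 77 dvd (F * cj F - 81)"
  proof -
    have cjd: "cj F - cj E' = - cj (E' - F)" unfolding cj_def by (simp add: pcompose_diff)
    have "F * cj F - 81 = (E' * cj E' - 81) - (E' - F) * cj F + E' * (cj F - cj E')" by (simp add: algebra_simps)
    then show ?thesis unfolding cjd using EE' EF cj_J[OF EF] by (metis dvd_add dvd_diff dvd_minus_iff dvd_mult dvd_mult2)
  qed
  have inv: "\<forall>j<77. f (26 * j mod 77) = f j"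
  proof (intro allI impI)
    fix j :: nat assume j: "j < 77"
    have "Jm 77 dvd (rs 77 (\<lambda>j. f ((26 * j) mod 77)) - rs 77 f)"
    proof -
      have "rs 77 (\<lambda>j. f ((26 * j) mod 77)) - rs 77 f = (phi F - F) - (phi (rs 77 f) - rs 77 (\<lambda>j. f ((26 * j) mod 77)))"
        unfolding F_def by simp
      then show ?thesis using phiF phi_rs[of f] by (metis dvd_diff)
    qed
    from rs_unique[OF _ this j] show "f (26 * j mod 77) = f j" by simp
  qed
  have s1q: "(\<Sum>l<77. f l * f l) = 81"
    by (rule sumsq_from_AC) (use FF in \<open>simp_all add: F_def cj_def\<close>)
  define g where "g = (\<lambda>r. \<Sum>t<7. f (r + t * 11))"
  define G where "G = rs 11 g"
  have J11: "Jm 11 dvd Jm 77" using Jm_dvd_monom_mult[of 11 7] unfolding Jm_def by simp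
  have FG: "Jm 11 dvd (F - G)" unfolding F_def G_def g_def by (rule mod11_rs)
  have GG: "Jm 11 dvd (G * (G \<circ>\<^sub>p monom 1 10) - 81)"
  proof -
    have a: "Jm 11 dvd (F * cj F - 81)" by (rule dvd_trans[OF J11 FF])
    have b: "Jm 11 dvd (cj F - G \<circ>\<^sub>p monom 1 76)"
    proof -
      have "cj F - G \<circ>\<^sub>p monom 1 76 = (F - G) \<circ>\<^sub>p monom 1 76" unfolding cj_def by (simp add: pcompose_diff)
      then show ?thesis using pcomp_outer_cong[OF FG] by simp
    qed
    have c: "Jm 11 dvd (G \<circ>\<^sub>p monom 1 76 - G \<circ>\<^sub>p monom 1 10)"
      by (rule pcomp_inner_cong, rule monom_cong) simp
    have "G * (G \<circ>\<^sub>p monom 1 10) - 81 = (F * cj F - 81) - (F - G) * cj F - G * (cj F - G \<circ>\<^sub>p monom 1 76) - G * (G \<circ>\<^sub>p monom 1 76 - G \<circ>\<^sub>p monom 1 10)"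
      by (simp add: algebra_simps)
    then show ?thesis using a b c FG by (metis dvd_diff dvd_mult dvd_mult2)
  qed
  have s2q: "(\<Sum>r<11. g r * g r) = 81"
    by (rule sumsq_from_AC) (use GG in \<open>simp_all add: G_def\<close>)
  show False
    by (rule final_concrete[OF bf inv s1q]) (use s2q in \<open>simp add: g_def\<close>)
qed

end
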